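(* Let $\mathbb{D}=\{z\in\mathbb{C}:|z|<1\}$, let $f$ be analytic on $\mathbb{D}$ and let $n\in\{2,3,\dots\}$. Then both \[ \phi_{\operatorname{n-Diam}}(r)=\frac{d_n(f(r\mathbb{D}))}{d_n(\mathbb{D})\,r}\quad\text{and}\quad \phi_{\operatorname{Cap}}(r)=\frac{\operatorname{Cap}(f(r\mathbb{D}))}{\operatorname{Cap}(r\mathbb{D})} \] are increasing convex functions of $\log r$ for $0<r<1$.
   Context: $r\mathbb{D}=\{z:|z|<r\}$ and $f(r\mathbb{D})$ is the image set. For $E\subset\mathbb{C}$, the $n$-diameter is $d_n(E)=\sup\big(\prod_{1\le j<k\le n}|\zeta_j-\zeta_k|\big)^{2/(n(n-1))}$ over all $n$-tuples of points of $E$; $d_n(\mathbb{D})=n^{1/(n-1)}$. $\operatorname{Cap}(E)$ is the logarithmic capacity, equal to the transfinite diameter $\lim_{n\to\infty}d_n(E)$; $\operatorname{Cap}(r\mathbb{D})=r$. *)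

theory Defs
  imports "HOL-Analysis.Analysis"
begin

definition n_diam :: "nat \<Rightarrow> complex set \<Rightarrow> real" where
  "n_diam n E = (SUP z \<in> {z :: nat \<Rightarrow> complex. \<forall>i<n. z i \<in> E}.
      (\<Prod>j<n. \<Prod>k\<in>{j<..<n}. cmod (z j - z k)) powr (2 / (real n * (real n - 1))))"

text \<open>Logarithmic capacity, as the transfinite diameter lim_{n->oo} d_n(E).\<close>
definition log_cap :: "complex set \<Rightarrow> real" where
  "log_cap E = lim (\<lambda>n. n_diam n E)"

end

theory Submission
  imports Defs "HOL-Complex_Analysis.Complex_Analysis"
begin


lemma annulus_max:
  fixes F :: "complex \<Rightarrow> complex"
  assumes holo: "F holomorphic_on (ball 0 1 - {0})"
    and r: "0 < r1" "r1 < r2" "r2 < 1"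
    and b1: "\<And>\<xi>. norm \<xi> = r1 \<Longrightarrow> norm (F \<xi>) \<le> M"
    and b2: "\<And>\<xi>. norm \<xi> = r2 \<Longrightarrow> norm (F \<xi>) \<le> M"
    and z: "r1 \<le> norm z" "norm z \<le> r2"
  shows "norm (F z) \<le> M"
proof (rule maximum_modulus_frontier [of F "cball 0 r2 - ball 0 r1"])
  have sub: "cball 0 r2 - ball 0 r1 \<subseteq> ball 0 1 - {0}" using r by auto
  have cl: "closed (cball 0 r2 - ball (0::complex) r1)" by blast
  show "F holomorphic_on interior (cball 0 r2 - ball 0 r1)"
    by (rule holomorphic_on_subset[OF holo]) (use sub interior_subset in blast)
  show "continuous_on (closure (cball 0 r2 - ball 0 r1)) F"
    using cl holomorphic_on_imp_continuous_on[OF holomorphic_on_subset[OF holo sub]]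
    by (simp add: closure_closed)
  show "bounded (cball 0 r2 - ball (0::complex) r1)" by (meson bounded_cball bounded_subset Diff_subset)
  show "z \<in> cball 0 r2 - ball 0 r1" using z by auto
  fix w :: complex assume w: "w \<in> frontier (cball 0 r2 - ball 0 r1)"
  have "open {w::complex. r1 < norm w \<and> norm w < r2}"
    by (intro open_Collect_conj open_Collect_less continuous_intros)
  moreover have "{w::complex. r1 < norm w \<and> norm w < r2} \<subseteq> cball 0 r2 - ball 0 r1" by auto
  ultimately have "{w::complex. r1 < norm w \<and> norm w < r2} \<subseteq> interior (cball 0 r2 - ball 0 r1)"
    by (meson interior_maximal)
  with w cl have "w \<in> cball (0::complex) r2 - ball 0 r1" "\<not> (r1 < norm w \<and> norm w < r2)"
    unfolding frontier_def by (auto simp: closure_closed)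
  then have "norm w = r1 \<or> norm w = r2" by auto
  then show "norm (F w) \<le> M" using b1 b2 by auto
qed



lemma powr_q_aux:
  fixes a :: real and q :: nat and p :: int
  assumes "a > 0" "q > 0"
  shows "(a powr (real_of_int p / real q)) ^ q = a powi p"
proof -
  have "(a powr (real_of_int p / real q)) ^ q = a powr (real q * (real_of_int p / real q))"
    using assms by (simp add: powr_power)
  also have "\<dots> = a powr (real_of_int p)" using assms by simp
  also have "\<dots> = a powi p" using assms by (simp add: powr_real_of_int')
  finally show ?thesis .
qed

lemma hadamard_rat:
  fixes h :: "complex \<Rightarrow> complex"
  assumes holo: "h holomorphic_on ball 0 1"
    and r: "0 < r1" "r1 < r2" "r2 < 1" and AB: "A > 0" "B > 0"
    and b1: "\<And>\<xi>. norm \<xi> = r1 \<Longrightarrow> norm (h \<xi>) \<le> A"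
    and b2: "\<And>\<xi>. norm \<xi> = r2 \<Longrightarrow> norm (h \<xi>) \<le> B"
    and z: "r1 \<le> norm z" "norm z \<le> r2" and q: "q > 0"
  shows "norm (h z) \<le> max ((r1/norm z) powr (real_of_int p / real q) * A)
                             ((r2/norm z) powr (real_of_int p / real q) * B)"
proof -
  define F where "F \<xi> = \<xi> powi p * h \<xi> ^ q" for \<xi>
  define M where "M = max (r1 powi p * A^q) (r2 powi p * B^q)"
  have hF: "F holomorphic_on (ball 0 1 - {0})" unfolding F_def
    by (intro holomorphic_intros holomorphic_on_subset[OF holo]) auto
  have nF: "norm (F \<xi>) = norm \<xi> powi p * norm (h \<xi>) ^ q" for \<xi>
    by (simp add: F_def norm_mult norm_power norm_power_int)
  have "norm (F \<xi>) \<le> M" if "norm \<xi> = r1" for \<xi>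
  proof -
    have "norm (F \<xi>) \<le> r1 powi p * A^q" unfolding nF that
      by (intro mult_left_mono power_mono) (use b1[OF that] r in auto)
    then show ?thesis unfolding M_def by linarith
  qed
  moreover have "norm (F \<xi>) \<le> M" if "norm \<xi> = r2" for \<xi>
  proof -
    have "norm (F \<xi>) \<le> r2 powi p * B^q" unfolding nF that
      by (intro mult_left_mono power_mono) (use b2[OF that] r in auto)
    then show ?thesis unfolding M_def by linarith
  qed
  ultimately have FM: "norm (F z) \<le> M"
    by (intro annulus_max[OF hF r _ _ z]) auto
  define \<rho> where "\<rho> = norm z"
  have \<rho>: "\<rho> > 0" using z r unfolding \<rho>_def by auto
  define X where "X = (r1/\<rho>) powr (real_of_int p / real q) * A"
  define Y where "Y = (r2/\<rho>) powr (real_of_int p / real q) * B"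
  have X: "X^q * \<rho> powi p = r1 powi p * A^q"
    unfolding X_def power_mult_distrib using \<rho> r q
    by (simp add: powr_q_aux power_int_divide_distrib)
  have Y: "Y^q * \<rho> powi p = r2 powi p * B^q"
    unfolding Y_def power_mult_distrib using \<rho> r q
    by (simp add: powr_q_aux power_int_divide_distrib)
  have "norm (h z) ^ q * \<rho> powi p \<le> max X Y ^ q * \<rho> powi p"
  proof -
    have "norm (h z) ^ q * \<rho> powi p \<le> M" using FM nF[of z] unfolding \<rho>_def by (simp add: mult.commute)
    also have "M \<le> max X Y ^ q * \<rho> powi p"
      unfolding M_def X[symmetric] Y[symmetric] using \<rho> AB
      by (intro max.boundedI mult_right_mono power_mono) (auto simp: X_def Y_def)
    finally show ?thesis .
  qed
  then have hq: "norm (h z) ^ q \<le> max X Y ^ q" using \<rho>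
    by (simp add: mult_le_cancel_right)
  obtain q' where qq: "q = Suc q'" using q gr0_implies_Suc by blast
  have "norm (h z) \<le> max X Y"
  proof -
    have "0 \<le> max X Y" using AB by (simp add: X_def le_max_iff_disj)
    then show ?thesis using power_le_imp_le_base[of "norm (h z)" q' "max X Y"] hq qq by simp
  qed
  then show ?thesis unfolding X_def Y_def \<rho>_def .
qed



lemma hadamard_real:
  fixes h :: "complex \<Rightarrow> complex"
  assumes holo: "h holomorphic_on ball 0 1"
    and r: "0 < r1" "r1 < r2" "r2 < 1" and AB: "A > 0" "B > 0"
    and b1: "\<And>\<xi>. norm \<xi> = r1 \<Longrightarrow> norm (h \<xi>) \<le> A"
    and b2: "\<And>\<xi>. norm \<xi> = r2 \<Longrightarrow> norm (h \<xi>) \<le> B"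
    and z: "r1 \<le> norm z" "norm z \<le> r2"
  shows "norm (h z) \<le> max ((r1/norm z) powr s * A) ((r2/norm z) powr s * B)"
proof -
  define g where "g s = max ((r1/norm z) powr s * A) ((r2/norm z) powr s * B)" for s
  have nz: "norm z > 0" using r z by auto
  have "continuous_on UNIV g" unfolding g_def
    using r nz by (intro continuous_intros continuous_on_powr) auto
  then have cl: "closed {s. norm (h z) \<le> g s}"
    by (intro closed_Collect_le continuous_intros)
  have "\<rat> \<subseteq> {s. norm (h z) \<le> g s}"
  proof
    fix x :: real assume "x \<in> \<rat>"
    then obtain a b where ab: "b > 0" "x = of_int a / of_int b" by (auto elim: Rats_cases')
    then have "x = real_of_int a / real (nat b)" by simp
    moreover have "nat b > 0" using ab by simp
    ultimately show "x \<in> {s. norm (h z) \<le> g s}" unfolding g_def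
      using hadamard_rat[OF holo r AB b1 b2 z, of "nat b" a] by simp
  qed
  then have "closure \<rat> \<subseteq> {s. norm (h z) \<le> g s}" using cl by (rule closure_minimal)
  then show ?thesis using Rats_closure_real unfolding g_def by auto
qed

lemma hadamard:
  fixes h :: "complex \<Rightarrow> complex"
  assumes holo: "h holomorphic_on ball 0 1"
    and r: "0 < r1" "r1 < r2" "r2 < 1" and AB: "A > 0" "B > 0"
    and b1: "\<And>\<xi>. norm \<xi> = r1 \<Longrightarrow> norm (h \<xi>) \<le> A"
    and b2: "\<And>\<xi>. norm \<xi> = r2 \<Longrightarrow> norm (h \<xi>) \<le> B"
    and uv: "u \<ge> 0" "v \<ge> 0" "u + v = 1"
    and z: "norm z = r1 powr u * r2 powr v"
  shows "norm (h z) \<le> A powr u * B powr v"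
proof -
  have "r1 powr u * r1 powr v \<le> r1 powr u * r2 powr v"
    using r uv by (intro mult_left_mono powr_mono2) auto
  then have z1: "r1 \<le> norm z" using z uv r by (simp add: powr_add[symmetric])
  have "r1 powr u * r2 powr v \<le> r2 powr u * r2 powr v"
    using r uv by (intro mult_right_mono powr_mono2) auto
  then have z2: "norm z \<le> r2" using z uv r by (simp add: powr_add[symmetric])
  have vu: "v = 1 - u" using uv by simp
  have znz: "z \<noteq> 0" using z1 r by auto
  define s where "s = (ln A - ln B) / (ln r2 - ln r1)"
  have L: "ln r2 - ln r1 > 0" using r by simp
  have lz: "ln (norm z) = u * ln r1 + v * ln r2" using z r by (simp add: ln_mult ln_powr)
  have e1: "(r1/norm z) powr s * A = A powr u * B powr v"
  proof -
    have "(r1/norm z) powr s * A = exp (s * (ln r1 - ln (norm z)) + ln A)"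
      using r z1 AB znz by (simp add: powr_def ln_div exp_add)
    also have "s * (ln r1 - ln (norm z)) + ln A = u * ln A + v * ln B"
      unfolding lz s_def vu using L by (simp add: field_simps)
    also have "exp (u * ln A + v * ln B) = A powr u * B powr v"
      using AB by (simp add: powr_def exp_add mult.commute)
    finally show ?thesis .
  qed
  have e2: "(r2/norm z) powr s * B = A powr u * B powr v"
  proof -
    have "(r2/norm z) powr s * B = exp (s * (ln r2 - ln (norm z)) + ln B)"
      using r z1 AB znz by (simp add: powr_def ln_div exp_add)
    also have "s * (ln r2 - ln (norm z)) + ln B = u * ln A + v * ln B"
      unfolding lz s_def vu using L by (simp add: field_simps)
    also have "exp (u * ln A + v * ln B) = A powr u * B powr v"
      using AB by (simp add: powr_def exp_add mult.commute)
    finally show ?thesis .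
  qed
  show ?thesis using hadamard_real[OF holo r AB b1 b2 z1 z2, of s] e1 e2 by simp
qed



definition ex :: "nat \<Rightarrow> real" where "ex n = 2 / (real n * (real n - 1))"
definition Pd :: "nat \<Rightarrow> (nat \<Rightarrow> complex) \<Rightarrow> real" where
  "Pd n z = (\<Prod>j<n. \<Prod>k\<in>{j<..<n}. cmod (z j - z k))"
definition Tup :: "nat \<Rightarrow> complex set \<Rightarrow> (nat \<Rightarrow> complex) set" where
  "Tup n E = {z. \<forall>i<n. z i \<in> E}"

lemma n_diam_alt: "n_diam n E = Sup ((\<lambda>z. Pd n z powr ex n) ` Tup n E)"
  unfolding n_diam_def Pd_def ex_def Tup_def by simp

lemma Pd_nonneg: "Pd n z \<ge> 0"
  unfolding Pd_def by (intro prod_nonneg) auto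

lemma sum_count: "2 * (\<Sum>j<n. (n - Suc j)) = n * (n - 1)"
proof (induction n)
  case (Suc n)
  have "(\<Sum>j<n. (Suc n - Suc j)) = (\<Sum>j<n. (n - Suc j) + 1)"
    by (intro sum.cong) auto
  also have "\<dots> = (\<Sum>j<n. (n - Suc j)) + n" by (simp only: sum.distrib) simp
  finally have "(\<Sum>j<Suc n. (Suc n - Suc j)) = (\<Sum>j<n. (n - Suc j)) + n" by simp
  then show ?case using Suc by (cases n) (auto simp: algebra_simps)
qed simp

lemma prod_const_count: "(\<Prod>j<n. \<Prod>k\<in>{j<..<n}. (c::real)) = c ^ (\<Sum>j<n. (n - Suc j))"
  by (simp add: power_sum)

lemma count_ex: assumes "n \<ge> 2" shows "real (\<Sum>j<n. (n - Suc j)) * ex n = 1"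
proof -
  have "real (2 * (\<Sum>j<n. (n - Suc j))) = real n * (real n - 1)"
    using assms by (subst sum_count) (simp add: of_nat_diff)
  moreover have "real n * (real n - 1) > 0" using assms by simp
  ultimately show ?thesis using assms unfolding ex_def by (simp add: field_simps)
qed

lemma ex_pos: "n \<ge> 2 \<Longrightarrow> ex n > 0" unfolding ex_def by simp

lemma Pd_bound:
  assumes n: "n \<ge> 2" and c: "c \<ge> 0"
    and b: "\<And>j k. j < k \<Longrightarrow> k < n \<Longrightarrow> cmod (z j - z k) \<le> c"
  shows "Pd n z powr ex n \<le> c"
proof -
  have "Pd n z \<le> (\<Prod>j<n. \<Prod>k\<in>{j<..<n}. c)" unfolding Pd_def
    by (intro prod_mono conjI prod_nonneg) (auto intro: b)
  also have "\<dots> = c ^ (\<Sum>j<n. (n - Suc j))" by (rule prod_const_count)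
  finally have le: "Pd n z \<le> c ^ (\<Sum>j<n. (n - Suc j))" .
  show ?thesis
  proof (cases "c = 0")
    case True
    have "(\<Sum>j<n. (n - Suc j)) > 0" using count_ex[OF n] by (metis mult_eq_0_iff of_nat_0 zero_neq_one gr0I)
    then have "(0::real) ^ (\<Sum>j<n. (n - Suc j)) = 0" by simp
    then have "Pd n z = 0" using le True Pd_nonneg[of n z] by (metis order_antisym)
    then show ?thesis using True by simp
  next
    case False
    then have "Pd n z powr ex n \<le> (c ^ (\<Sum>j<n. (n - Suc j))) powr ex n"
      using le Pd_nonneg ex_pos[OF n] by (intro powr_mono2) auto
    also have "\<dots> = c" using False c count_ex[OF n]
      by (simp add: powr_realpow[symmetric] powr_powr)
    finally show ?thesis .
  qed
qed

lemma Tup_bdd: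
  assumes n: "n \<ge> 2" and E: "bounded E" "E \<noteq> {}"
  shows "bdd_above ((\<lambda>z. Pd n z powr ex n) ` Tup n E)" "(\<lambda>z. Pd n z powr ex n) ` Tup n E \<noteq> {}"
proof -
  obtain K where K: "\<And>x. x \<in> E \<Longrightarrow> norm x \<le> K" using E bounded_iff by blast
  obtain x0 where x0: "x0 \<in> E" using E by blast
  then have K0: "K \<ge> 0" using K[OF x0] norm_ge_zero[of x0] by linarith
  have "Pd n z powr ex n \<le> 2*K" if "z \<in> Tup n E" for z
  proof (rule Pd_bound[OF n])
    fix j k assume "j < k" "k < n"
    then have "z j \<in> E" "z k \<in> E" using that unfolding Tup_def by auto
    then show "cmod (z j - z k) \<le> 2*K" using K[of "z j"] K[of "z k"] norm_triangle_ineq4[of "z j" "z k"] by linarith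
  qed (use K0 in auto)
  then show "bdd_above ((\<lambda>z. Pd n z powr ex n) ` Tup n E)" by (intro bdd_aboveI2) blast
  have "(\<lambda>_. x0) \<in> Tup n E" using x0 by (simp add: Tup_def)
  then show "(\<lambda>z. Pd n z powr ex n) ` Tup n E \<noteq> {}" by blast
qed

lemma n_diam_upper:
  assumes "n \<ge> 2" "bounded E" "E \<noteq> {}" "z \<in> Tup n E"
  shows "Pd n z powr ex n \<le> n_diam n E"
  unfolding n_diam_alt using Tup_bdd[OF assms(1-3)] assms(4) by (intro cSup_upper) auto

lemma n_diam_least:
  assumes "n \<ge> 2" "bounded E" "E \<noteq> {}" "\<And>z. z \<in> Tup n E \<Longrightarrow> Pd n z powr ex n \<le> c"
  shows "n_diam n E \<le> c"
  unfolding n_diam_alt using Tup_bdd[OF assms(1-3)] assms(4) by (intro cSup_least) auto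

lemma n_diam_nonneg:
  assumes "n \<ge> 2" "bounded E" "E \<noteq> {}"
  shows "n_diam n E \<ge> 0"
proof -
  obtain x0 where "x0 \<in> E" using assms by blast
  then have "(\<lambda>_. x0) \<in> Tup n E" by (simp add: Tup_def)
  from n_diam_upper[OF assms this] show ?thesis by (smt (verit) powr_ge_zero)
qed



lemma Pd_cong: "(\<And>i. i < n \<Longrightarrow> z i = z' i) \<Longrightarrow> Pd n z = Pd n z'"
  unfolding Pd_def by (intro prod.cong refl) auto

lemma img_bdd:
  assumes holo: "f holomorphic_on ball 0 1" and r: "0 < r" "r < 1"
  shows "bounded (f ` ball 0 r)" "f ` ball 0 r \<noteq> {}"
proof -
  have "cball 0 r \<subseteq> ball (0::complex) 1" using r by auto
  then have "continuous_on (cball 0 r) f"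
    using holomorphic_on_imp_continuous_on[OF holomorphic_on_subset[OF holo]] by blast
  then have "compact (f ` cball 0 r)" by (intro compact_continuous_image) auto
  then show "bounded (f ` ball 0 r)"
    by (meson ball_subset_cball bounded_subset compact_imp_bounded image_mono)
  show "f ` ball 0 r \<noteq> {}" using r by auto
qed

lemma conv_core:
  fixes f :: "complex \<Rightarrow> complex"
  assumes holo: "f holomorphic_on ball 0 1" and n: "n \<ge> 2"
    and xy: "x < y" "y < 0" and uv: "u \<ge> 0" "v \<ge> 0" "u + v = 1"
  shows "n_diam n (f ` ball 0 (exp (u * x + v * y))) / exp (u * x + v * y)
         \<le> u * (n_diam n (f ` ball 0 (exp x)) / exp x) + v * (n_diam n (f ` ball 0 (exp y)) / exp y)"
proof -
  define t where "t = u * x + v * y"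
  define r where "r = exp t"
  define D where "D s = n_diam n (f ` ball 0 (exp s))" for s
  define Px where "Px = D x / exp x"
  define Py where "Py = D y / exp y"
  have "u * x \<le> u * y" using xy uv by (intro mult_left_mono) auto
  moreover have "u * y + v * y = y" using uv by (simp add: distrib_right[symmetric])
  ultimately have tlt: "t < 0" unfolding t_def using xy by linarith
  have bd: "bounded (f ` ball 0 (exp s))" "f ` ball 0 (exp s) \<noteq> {}" if "s < 0" for s
    using img_bdd[OF holo, of "exp s"] that by auto
  have Px0: "Px \<ge> 0" "Py \<ge> 0" unfolding Px_def Py_def D_def
    using n_diam_nonneg[OF n bd] xy by auto
  have e: "ex n > 0" using ex_pos[OF n] .
  have main: "D t \<le> r * (u * Px + v * Py + \<epsilon>)" if \<epsilon>: "\<epsilon> > 0" for \<epsilon>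
    unfolding D_def
  proof (rule n_diam_least[OF n bd[OF tlt]])
    fix \<zeta> assume "\<zeta> \<in> Tup n (f ` ball 0 (exp t))"
    then have "\<forall>i. \<exists>a. i < n \<longrightarrow> a \<in> ball 0 r \<and> \<zeta> i = f a"
      unfolding Tup_def r_def by blast
    then obtain a where a: "\<And>i. i < n \<Longrightarrow> a i \<in> ball 0 r \<and> \<zeta> i = f (a i)"
      by metis
    define w where "w i = a i / of_real r" for i
    have r0: "r > 0" unfolding r_def by simp
    have wlt: "norm (w i) < 1" if "i < n" for i
      using a[OF that] r0 by (simp add: w_def norm_divide)
    define h where "h \<xi> = (\<Prod>j<n. \<Prod>k\<in>{j<..<n}. (f (\<xi> * w j) - f (\<xi> * w k)))" for \<xi>
    have nh: "norm (h \<xi>) = Pd n (\<lambda>i. f (\<xi> * w i))" for \<xi>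
      unfolding h_def Pd_def by (simp add: prod_norm)
    have fw: "(\<lambda>\<xi>. f (\<xi> * w j)) holomorphic_on ball 0 1" if "j < n" for j
    proof -
      have "(\<lambda>\<xi>. \<xi> * w j) ` ball 0 1 \<subseteq> ball 0 1"
      proof safe
        fix \<xi> :: complex assume "\<xi> \<in> ball 0 1"
        then have "norm \<xi> \<le> 1" by simp
        then have "norm \<xi> * norm (w j) \<le> norm (w j)"
          using mult_right_mono[of "norm \<xi>" 1 "norm (w j)"] by simp
        then show "\<xi> * w j \<in> ball 0 1" using wlt[OF that] by (simp add: norm_mult)
      qed
      then show ?thesis
        using holomorphic_on_compose_gen[of "\<lambda>\<xi>. \<xi> * w j" "ball 0 1" f "ball 0 1"] holo
        by (auto simp: o_def holomorphic_on_mult holomorphic_on_id holomorphic_on_const)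
    qed
    have hh: "h holomorphic_on ball 0 1" unfolding h_def
      by (intro holomorphic_on_prod holomorphic_intros fw) auto
    define A where "A = ((Px + \<epsilon>) * exp x) powr (1 / ex n)"
    define B where "B = ((Py + \<epsilon>) * exp y) powr (1 / ex n)"
    have AB: "A > 0" "B > 0" unfolding A_def B_def using Px0 \<epsilon> by auto
    have bnd: "norm (h \<xi>) \<le> ((P + \<epsilon>) * exp s) powr (1 / ex n)"
      if s: "s < 0" "norm \<xi> = exp s" and P: "P = D s / exp s" for \<xi> s P
    proof -
      have "(\<lambda>i. f (\<xi> * w i)) \<in> Tup n (f ` ball 0 (exp s))"
        unfolding Tup_def
      proof safe
        fix i assume "i < n"
        then have "norm (\<xi> * w i) < exp s" using wlt[of i] s by (simp add: norm_mult)
        then show "f (\<xi> * w i) \<in> f ` ball 0 (exp s)" by auto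
      qed
      then have "Pd n (\<lambda>i. f (\<xi> * w i)) powr ex n \<le> D s"
        unfolding D_def by (rule n_diam_upper[OF n bd[OF s(1)]])
      also have "D s \<le> (P + \<epsilon>) * exp s" using P \<epsilon> by (simp add: field_simps)
      finally have le: "Pd n (\<lambda>i. f (\<xi> * w i)) powr ex n \<le> (P + \<epsilon>) * exp s" .
      have "norm (h \<xi>) = (Pd n (\<lambda>i. f (\<xi> * w i)) powr ex n) powr (1 / ex n)"
        using e by (simp add: nh powr_powr Pd_nonneg)
      also have "\<dots> \<le> ((P + \<epsilon>) * exp s) powr (1 / ex n)"
        using le e by (intro powr_mono2) auto
      finally show ?thesis .
    qed
    have hr: "norm (h (of_real r)) \<le> A powr u * B powr v"
    proof (rule hadamard[OF hh _ _ _ AB _ _ uv])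
      show "0 < exp x" "exp x < exp y" "exp y < 1" using xy by auto
      show "norm (h \<xi>) \<le> A" if "norm \<xi> = exp x" for \<xi>
        unfolding A_def using bnd[of x \<xi> Px] that xy Px_def by auto
      show "norm (h \<xi>) \<le> B" if "norm \<xi> = exp y" for \<xi>
        unfolding B_def using bnd[of y \<xi> Py] that xy Py_def by auto
      show "norm (complex_of_real r) = exp x powr u * exp y powr v"
        unfolding r_def t_def by (simp add: powr_def exp_add mult.commute norm_mult)
    qed
    have "Pd n \<zeta> = norm (h (of_real r))"
      unfolding nh using r0 a by (intro Pd_cong) (auto simp: w_def)
    then have "Pd n \<zeta> powr ex n \<le> (A powr u * B powr v) powr ex n"
      using hr e by (intro powr_mono2) (auto simp: Pd_nonneg)
    also have "\<dots> = ((Px + \<epsilon>) * exp x) powr u * ((Py + \<epsilon>) * exp y) powr v"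
      unfolding A_def B_def using e by (simp add: powr_mult powr_powr)
    also have "\<dots> = ((Px + \<epsilon>) powr u * (Py + \<epsilon>) powr v) * r"
    proof -
      have px: "Px + \<epsilon> > 0" "Py + \<epsilon> > 0" using Px0 \<epsilon> by auto
      have "((Px + \<epsilon>) * exp x) powr u = (Px + \<epsilon>) powr u * exp (u * x)"
        using px by (simp add: powr_mult exp_powr_real mult.commute)
      moreover have "((Py + \<epsilon>) * exp y) powr v = (Py + \<epsilon>) powr v * exp (v * y)"
        using px by (simp add: powr_mult exp_powr_real mult.commute)
      ultimately show ?thesis unfolding r_def t_def by (simp add: exp_add mult_ac)
    qed
    also have "\<dots> \<le> (u * (Px + \<epsilon>) + v * (Py + \<epsilon>)) * r"
      using Youngs_inequality_0[OF uv, of "Px + \<epsilon>" "Py + \<epsilon>"] Px0 \<epsilon> r0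
      by (intro mult_right_mono) auto
    also have "\<dots> = r * (u * Px + v * Py + (u + v) * \<epsilon>)" by (simp add: algebra_simps)
    also have "\<dots> = r * (u * Px + v * Py + \<epsilon>)" using uv by simp
    finally show "Pd n \<zeta> powr ex n \<le> r * (u * Px + v * Py + \<epsilon>)" .
  qed
  have "D t / r \<le> u * Px + v * Py"
  proof (rule field_le_epsilon)
    fix \<epsilon> :: real assume "\<epsilon> > 0"
    then show "D t / r \<le> u * Px + v * Py + \<epsilon>" using main[of \<epsilon>]
      unfolding r_def by (simp add: field_simps)
  qed
  then show ?thesis unfolding D_def Px_def Py_def r_def t_def .
qed



lemma convex_bdd_mono:
  fixes g :: "real \<Rightarrow> real"
  assumes cv: "convex_on {..<0} g" and bd: "\<And>t. t \<le> T0 \<Longrightarrow> g t \<le> C"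
  shows "mono_on {..<0} g"
proof (rule mono_onI)
  fix x y :: real assume xy: "x \<in> {..<0}" "y \<in> {..<0}" "x \<le> y"
  show "g x \<le> g y"
  proof (rule ccontr)
    assume "\<not> g x \<le> g y"
    then have d: "g x - g y > 0" by simp
    then have xly: "x < y" using xy by (cases "x = y") auto
    define K where "K = \<bar>C - g y\<bar> * (y - x) / (g x - g y)"
    have K0: "K \<ge> 0" unfolding K_def using d xly by auto
    define t where "t = min T0 x - 1 - K"
    have tx: "t < x" "t \<le> T0" unfolding t_def using K0 by auto
    define s where "s = (x - t) / (y - t)"
    have s01: "0 \<le> s" "s \<le> 1" unfolding s_def using tx xly by (auto simp: field_simps)
    have "s * (y - t) = x - t" unfolding s_def using tx xly by simp
    then have "x = (1 - s) * t + s * y" by (simp add: algebra_simps)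
    then have "g x \<le> (1 - s) * g t + s * g y"
      using convex_onD[OF cv s01, of t y] tx xy by auto
    then have "g x - g y \<le> (1 - s) * (g t - g y)" by (simp add: algebra_simps)
    moreover have "1 - s = (y - x) / (y - t)" unfolding s_def using tx xly by (simp add: field_simps)
    ultimately have "(g x - g y) * (y - t) \<le> (y - x) * (g t - g y)"
      using tx xly by (simp add: field_simps)
    moreover have "t \<le> x - 1 - K" unfolding t_def by simp
    then have "y - t > K + (y - x)" by linarith
    then have "(g x - g y) * (y - t) > (g x - g y) * K" using d xly by (simp add: mult_strict_left_mono)
    moreover have "(g x - g y) * K = \<bar>C - g y\<bar> * (y - x)" unfolding K_def using d by simp
    ultimately have "\<bar>C - g y\<bar> * (y - x) < (y - x) * (g t - g y)" by linarith
    then have "\<bar>C - g y\<bar> < g t - g y" using xly by (simp add: mult.commute)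
    then have "g t > C" by linarith
    with bd[OF tx(2)] show False by linarith
  qed
qed

lemma lipschitz_half:
  fixes f :: "complex \<Rightarrow> complex"
  assumes holo: "f holomorphic_on ball 0 1"
  obtains L where "L \<ge> 0" "\<And>a b. (a::complex) \<in> cball 0 (1/2) \<Longrightarrow> b \<in> cball 0 (1/2) \<Longrightarrow> norm (f a - f b) \<le> L * norm (a - b)"
proof -
  have sub: "cball 0 (1/2) \<subseteq> ball (0::complex) 1" by auto
  have "continuous_on (cball 0 (1/2)) (deriv f)"
    using holomorphic_on_imp_continuous_on[OF holomorphic_on_subset[OF holomorphic_deriv[OF holo] sub]] by simp
  then have "compact (deriv f ` cball 0 (1/2))" by (intro compact_continuous_image) auto
  from compact_imp_bounded[OF this] obtain L where L': "\<And>w. w \<in> deriv f ` cball 0 (1/2) \<Longrightarrow> norm w \<le> L"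
    unfolding bounded_iff by blast
  have L: "norm (deriv f z) \<le> L" if "z \<in> cball 0 (1/2)" for z
    using L'[of "deriv f z"] that by blast
  have "norm (deriv f 0) \<le> L" by (rule L) simp
  then have L0: "L \<ge> 0" using norm_ge_zero[of "deriv f 0"] by linarith
  show ?thesis
  proof (rule that[OF L0])
    fix a b :: complex assume ab: "a \<in> cball 0 (1/2)" "b \<in> cball (0::complex) (1/2)"
    show "norm (f a - f b) \<le> L * norm (a - b)"
    proof (rule field_differentiable_bound[OF convex_cball _ _ ab])
      fix z assume "z \<in> cball (0::complex) (1/2)"
      then show "(f has_field_derivative deriv f z) (at z within cball 0 (1/2))"
        using holomorphic_derivI[OF holo open_ball] sub by blast
      show "norm (deriv f z) \<le> L" using L \<open>z \<in> _\<close> by blast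
    qed
  qed
qed

lemma phi_bound:
  fixes f :: "complex \<Rightarrow> complex"
  assumes holo: "f holomorphic_on ball 0 1" and n: "n \<ge> 2"
  obtains C where "\<And>t. t \<le> -1 \<Longrightarrow> n_diam n (f ` ball 0 (exp t)) / exp t \<le> C"
proof -
  obtain L where L0: "L \<ge> 0" and L: "\<And>a b. a \<in> cball 0 (1/2) \<Longrightarrow> b \<in> cball 0 (1/2) \<Longrightarrow> norm (f a - f b) \<le> L * norm (a - b)"
    using lipschitz_half[OF holo] by blast
  have "n_diam n (f ` ball 0 (exp t)) / exp t \<le> 2 * L" if t: "t \<le> -1" for t
  proof -
    have et: "exp t \<le> 1/2"
    proof -
      have "exp t \<le> exp (-1)" using t by simp
      moreover have "exp (1::real) \<ge> 2" using exp_ge_add_one_self[of 1] by simp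
      then have "exp (-1::real) \<le> 1/2" by (simp add: exp_minus field_simps)
      ultimately show ?thesis by linarith
    qed
    have "n_diam n (f ` ball 0 (exp t)) \<le> 2 * L * exp t"
    proof -
    have bd: "bounded (f ` ball 0 (exp t))" "f ` ball 0 (exp t) \<noteq> {}"
      using img_bdd[OF holo, of "exp t"] t by auto
    show ?thesis
    proof (rule n_diam_least[OF n bd])
      fix \<zeta> assume z: "\<zeta> \<in> Tup n (f ` ball 0 (exp t))"
      show "Pd n \<zeta> powr ex n \<le> 2 * L * exp t"
      proof (rule Pd_bound[OF n])
        show "0 \<le> 2 * L * exp t" using L0 by simp
        fix j k assume jk: "j < k" "k < n"
        obtain a b where ab: "a \<in> ball 0 (exp t)" "\<zeta> j = f a" "b \<in> ball 0 (exp t)" "\<zeta> k = f b"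
        proof -
          have "\<zeta> j \<in> f ` ball 0 (exp t)" "\<zeta> k \<in> f ` ball 0 (exp t)"
            using z jk unfolding Tup_def by auto
          then show ?thesis using that by blast
        qed
        have "norm (f a - f b) \<le> L * norm (a - b)" using ab et by (intro L) auto
        also have "\<dots> \<le> L * (2 * exp t)"
          using ab norm_triangle_ineq4[of a b] L0 by (intro mult_left_mono) auto
        finally show "cmod (\<zeta> j - \<zeta> k) \<le> 2 * L * exp t" using ab by simp
      qed
    qed
    qed
    then show ?thesis by (simp add: field_simps)
  qed
  then show ?thesis using that by blast
qed

lemma phi_convex:
  fixes f :: "complex \<Rightarrow> complex"
  assumes holo: "f holomorphic_on ball 0 1" and n: "n \<ge> 2"
  shows "convex_on {..<0} (\<lambda>t. n_diam n (f ` ball 0 (exp t)) / exp t)"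
  unfolding convex_on_def
proof (intro conjI ballI allI impI)
  show "convex {..<0::real}" by simp
  fix x y u v :: real assume xy: "x \<in> {..<0}" "y \<in> {..<0}" and uv: "0 \<le> u" "0 \<le> v" "u + v = 1"
  let ?g = "\<lambda>t. n_diam n (f ` ball 0 (exp t)) / exp t"
  consider "x < y" | "y < x" | "x = y" by linarith
  then show "?g (u *\<^sub>R x + v *\<^sub>R y) \<le> u * ?g x + v * ?g y"
  proof cases
    case 1 then show ?thesis using conv_core[OF holo n 1 _ uv] xy by simp
  next
    case 2 then show ?thesis using conv_core[OF holo n 2 _ uv(2,1)] xy uv(3)
      by (simp add: add.commute)
  next
    case 3
    have "u * x + v * x = x" using uv by (simp add: distrib_right[symmetric])
    moreover have "u * ?g x + v * ?g x = ?g x" using uv(3) by (metis distrib_right mult_1)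
    ultimately show ?thesis using 3 by simp
  qed
qed

lemma phi_mono:
  fixes f :: "complex \<Rightarrow> complex"
  assumes holo: "f holomorphic_on ball 0 1" and n: "n \<ge> 2"
  shows "mono_on {..<0} (\<lambda>t. n_diam n (f ` ball 0 (exp t)) / exp t)"
proof -
  obtain C where "\<And>t. t \<le> -1 \<Longrightarrow> n_diam n (f ` ball 0 (exp t)) / exp t \<le> C"
    using phi_bound[OF holo n] by blast
  then show ?thesis by (intro convex_bdd_mono[OF phi_convex[OF holo n]])
qed



definition PS :: "nat \<Rightarrow> (nat \<times> nat) set" where "PS N = {(j,k). j < k \<and> k < N}"
definition sig :: "nat \<Rightarrow> nat \<Rightarrow> nat" where "sig i m = (if m < i then m else Suc m)"

lemma PS_finite: "finite (PS N)"
  by (rule finite_subset[of _ "{..<N} \<times> {..<N}"]) (auto simp: PS_def)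

lemma Pd_PS: "Pd N z = (\<Prod>p\<in>PS N. cmod (z (fst p) - z (snd p)))"
proof -
  have "Pd N z = (\<Prod>p\<in>(SIGMA j:{..<N}. {j<..<N}). cmod (z (fst p) - z (snd p)))"
    unfolding Pd_def by (subst prod.Sigma) (auto simp: case_prod_beta)
  also have "(SIGMA j:{..<N}. {j<..<N}) = PS N" by (auto simp: PS_def)
  finally show ?thesis .
qed

lemma bij_sig:
  assumes "i < Suc n"
  shows "bij_betw (map_prod (sig i) (sig i)) (PS n) {p \<in> PS (Suc n). fst p \<noteq> i \<and> snd p \<noteq> i}"
proof (rule bij_betw_imageI)
  show "inj_on (map_prod (sig i) (sig i)) (PS n)"
    by (auto simp: inj_on_def sig_def split: if_splits)
  show "map_prod (sig i) (sig i) ` PS n = {p \<in> PS (Suc n). fst p \<noteq> i \<and> snd p \<noteq> i}"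
  proof safe
    fix a b assume "(a, b) \<in> PS (Suc n)" "fst (a,b) \<noteq> i" "snd (a,b) \<noteq> i"
    then have ab: "a < b" "b < Suc n" "a \<noteq> i" "b \<noteq> i" by (auto simp: PS_def)
    define ta where "ta = (if a < i then a else a - 1)"
    define tb where "tb = (if b < i then b else b - 1)"
    have "(ta, tb) \<in> PS n" "sig i ta = a" "sig i tb = b"
      using ab assms unfolding ta_def tb_def PS_def sig_def by auto
    then show "(a, b) \<in> map_prod (sig i) (sig i) ` PS n" by force
  qed (auto simp: PS_def sig_def split: if_splits)
qed

lemma Pd_remove:
  assumes "i < Suc n"
  shows "Pd n (z \<circ> sig i) = (\<Prod>p\<in>{p \<in> PS (Suc n). fst p \<noteq> i \<and> snd p \<noteq> i}. cmod (z (fst p) - z (snd p)))"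
  unfolding Pd_PS using prod.reindex_bij_betw[OF bij_sig[OF assms], of "\<lambda>p. cmod (z (fst p) - z (snd p))"]
  by simp

lemma card_rest:
  assumes "p \<in> PS (Suc n)"
  shows "card {i \<in> {..<Suc n}. fst p \<noteq> i \<and> snd p \<noteq> i} = n - 1"
proof -
  obtain j k where p: "p = (j,k)" "j < k" "k < Suc n" using assms by (auto simp: PS_def)
  have "{i \<in> {..<Suc n}. fst p \<noteq> i \<and> snd p \<noteq> i} = {..<Suc n} - {j, k}" using p by auto
  moreover have "card ({..<Suc n} - {j, k}) = Suc n - 2"
    using p by (subst card_Diff_subset) auto
  ultimately show ?thesis by simp
qed

lemma prod_remove:
  "(\<Prod>i<Suc n. Pd n (z \<circ> sig i)) = Pd (Suc n) z ^ (n - 1)"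
proof -
  define g where "g p = cmod (z (fst p) - z (snd p))" for p
  have "(\<Prod>i<Suc n. Pd n (z \<circ> sig i))
      = (\<Prod>i<Suc n. \<Prod>p\<in>PS (Suc n). if fst p \<noteq> i \<and> snd p \<noteq> i then g p else 1)"
    unfolding g_def by (intro prod.cong refl) (simp add: Pd_remove prod.inter_filter[OF PS_finite])
  also have "\<dots> = (\<Prod>p\<in>PS (Suc n). \<Prod>i<Suc n. if fst p \<noteq> i \<and> snd p \<noteq> i then g p else 1)"
    by (rule prod.swap)
  also have "\<dots> = (\<Prod>p\<in>PS (Suc n). g p ^ (n - 1))"
  proof (intro prod.cong refl)
    fix p assume p: "p \<in> PS (Suc n)"
    have "(\<Prod>i<Suc n. if fst p \<noteq> i \<and> snd p \<noteq> i then g p else 1)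
        = (\<Prod>i\<in>{i \<in> {..<Suc n}. fst p \<noteq> i \<and> snd p \<noteq> i}. g p)"
      by (subst prod.inter_filter) auto
    also have "\<dots> = g p ^ (n - 1)" using card_rest[OF p] by simp
    finally show "(\<Prod>i<Suc n. if fst p \<noteq> i \<and> snd p \<noteq> i then g p else 1) = g p ^ (n - 1)" .
  qed
  also have "\<dots> = Pd (Suc n) z ^ (n - 1)" unfolding Pd_PS g_def by (simp add: prod_power_distrib)
  finally show ?thesis .
qed



lemma n_diam_decr:
  assumes n: "n \<ge> 2" and E: "bounded E" "E \<noteq> {}"
  shows "n_diam (Suc n) E \<le> n_diam n E"
proof (rule n_diam_least)
  show "Suc n \<ge> 2" using n by simp
  show "bounded E" "E \<noteq> {}" using E by auto
  define d where "d = n_diam n E"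
  have d0: "d \<ge> 0" unfolding d_def using n_diam_nonneg[OF n E] .
  have e: "ex n > 0" using ex_pos[OF n] .
  fix z assume z: "z \<in> Tup (Suc n) E"
  define P where "P = Pd (Suc n) z"
  have P0: "P \<ge> 0" unfolding P_def by (rule Pd_nonneg)
  have each: "Pd n (z \<circ> sig i) \<le> d powr (1 / ex n)" if i: "i < Suc n" for i
  proof -
    have "z \<circ> sig i \<in> Tup n E" using z i unfolding Tup_def sig_def by auto
    then have le: "Pd n (z \<circ> sig i) powr ex n \<le> d" unfolding d_def by (rule n_diam_upper[OF n E])
    have "Pd n (z \<circ> sig i) = (Pd n (z \<circ> sig i) powr ex n) powr (1 / ex n)"
      using e by (simp add: powr_powr Pd_nonneg)
    also have "\<dots> \<le> d powr (1 / ex n)" using le e by (intro powr_mono2) auto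
    finally show ?thesis .
  qed
  have "P ^ (n - 1) \<le> (\<Prod>i<Suc n. d powr (1 / ex n))"
    unfolding P_def prod_remove[symmetric]
    by (intro prod_mono conjI Pd_nonneg each) auto
  also have "\<dots> = (d powr (1 / ex n)) ^ Suc n" by simp
  finally have Pn: "P ^ (n - 1) \<le> (d powr (1 / ex n)) ^ Suc n" .
  show "Pd (Suc n) z powr ex (Suc n) \<le> d"
  proof (cases "P = 0 \<or> d = 0")
    case True
    then have "P = 0"
    proof
      assume "d = 0"
      then have "P ^ (n - 1) \<le> 0" using Pn n by simp
      moreover have "P ^ (n - 1) \<ge> 0" using P0 by simp
      ultimately have "P ^ (n - 1) = 0" by linarith
      then show "P = 0" by simp
    qed
    then show ?thesis using d0 unfolding P_def by simp
  next
    case False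
    then have Pp: "P > 0" and dp: "d > 0" using P0 d0 by auto
    have n1: "real (n - 1) > 0" using n by simp
    have "P powr ex (Suc n) = (P powr real (n - 1)) powr (ex (Suc n) / real (n - 1))"
      using n1 by (simp add: powr_powr)
    also have "P powr real (n - 1) = P ^ (n - 1)" using Pp by (simp add: powr_realpow)
    also have "(P ^ (n - 1)) powr (ex (Suc n) / real (n - 1))
             \<le> ((d powr (1 / ex n)) ^ Suc n) powr (ex (Suc n) / real (n - 1))"
      using Pn n1 ex_pos[of "Suc n"] n P0 by (intro powr_mono2) auto
    also have "(d powr (1 / ex n)) ^ Suc n = d powr (real (Suc n) / ex n)"
    proof -
      have "(d powr (1 / ex n)) ^ Suc n = (d powr (1 / ex n)) powr real (Suc n)"
      proof -
        have "d powr (1 / ex n) > 0" using dp by simp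
        then show ?thesis by (rule powr_realpow[symmetric])
      qed
      also have "\<dots> = d powr (real (Suc n) / ex n)" by (simp add: powr_powr)
      finally show ?thesis .
    qed
    also have "(d powr (real (Suc n) / ex n)) powr (ex (Suc n) / real (n - 1))
             = d powr (real (Suc n) / ex n * (ex (Suc n) / real (n - 1)))"
      by (simp add: powr_powr)
    also have "real (Suc n) / ex n * (ex (Suc n) / real (n - 1)) = 1"
    proof -
      have "real n \<ge> 2" using n by simp
      then have "real n * real n \<ge> 2 * 2" by (intro mult_mono) auto
      then show ?thesis using n n1 unfolding ex_def by (simp add: of_nat_diff field_simps)
    qed
    finally show ?thesis unfolding P_def using d0 by simp
  qed
qed

lemma n_diam_conv:
  assumes E: "bounded E" "E \<noteq> {}"
  shows "(\<lambda>n. n_diam n E) \<longlonglongrightarrow> log_cap E" "log_cap E \<ge> 0"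
proof -
  define a where "a m = n_diam (m + 2) E" for m
  have "decseq a" unfolding a_def
    by (rule decseq_SucI) (simp add: n_diam_decr[OF _ E])
  moreover have "\<And>m. 0 \<le> a m" unfolding a_def by (rule n_diam_nonneg) (use E in auto)
  ultimately obtain L where L: "a \<longlonglongrightarrow> L" "\<And>m. L \<le> a m"
    using decseq_convergent[of a 0] by blast
  then have "(\<lambda>n. n_diam n E) \<longlonglongrightarrow> L" using LIMSEQ_offset[of "\<lambda>n. n_diam n E" 2 L] unfolding a_def by simp
  moreover then have "log_cap E = L" unfolding log_cap_def by (rule limI)
  ultimately show "(\<lambda>n. n_diam n E) \<longlonglongrightarrow> log_cap E" by simp
  show "log_cap E \<ge> 0"
    using \<open>log_cap E = L\<close> L(1) \<open>\<And>m. 0 \<le> a m\<close> by (metis LIMSEQ_le_const)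
qed

lemma Pd_scale:
  assumes n: "n \<ge> 2"
  shows "Pd n (\<lambda>i. c * z i) powr ex n = norm c * Pd n z powr ex n"
proof -
  have "Pd n (\<lambda>i. c * z i) = (\<Prod>j<n. \<Prod>k\<in>{j<..<n}. norm c * cmod (z j - z k))"
    unfolding Pd_def by (simp add: right_diff_distrib[symmetric] norm_mult)
  also have "\<dots> = (\<Prod>j<n. \<Prod>k\<in>{j<..<n}. norm c) * Pd n z"
    unfolding Pd_def by (simp add: prod.distrib)
  also have "(\<Prod>j<n. \<Prod>k\<in>{j<..<n}. norm c) = norm c ^ (\<Sum>j<n. (n - Suc j))"
    by (rule prod_const_count)
  finally have eq: "Pd n (\<lambda>i. c * z i) = norm c ^ (\<Sum>j<n. (n - Suc j)) * Pd n z" .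
  have m0: "(\<Sum>j<n. (n - Suc j)) > 0" using count_ex[OF n] by (metis mult_eq_0_iff of_nat_0 zero_neq_one gr0I)
  show ?thesis
  proof (cases "c = 0")
    case True then show ?thesis using eq m0 by simp
  next
    case False
    have "(norm c ^ (\<Sum>j<n. (n - Suc j))) powr ex n = norm c"
      using False count_ex[OF n] by (simp add: powr_realpow[symmetric] powr_powr)
    then show ?thesis unfolding eq by (simp add: powr_mult Pd_nonneg)
  qed
qed

lemma n_diam_ball_scale:
  assumes n: "n \<ge> 2" and r: "r > 0"
  shows "n_diam n (ball 0 r) = r * n_diam n (ball 0 1)"
proof (rule antisym)
  have bd: "bounded (ball (0::complex) s)" "ball (0::complex) s \<noteq> {}" if "s > 0" for s
    using that by auto
  have bd1: "bounded (ball (0::complex) 1)" "ball (0::complex) 1 \<noteq> {}" by auto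
  show "n_diam n (ball 0 r) \<le> r * n_diam n (ball 0 1)"
  proof (rule n_diam_least[OF n bd[OF r]])
    fix z assume z: "z \<in> Tup n (ball 0 r)"
    define z' where "z' i = z i / of_real r" for i
    have "z' \<in> Tup n (ball 0 1)" using z r unfolding Tup_def z'_def by (auto simp: norm_divide)
    then have "Pd n z' powr ex n \<le> n_diam n (ball 0 1)" by (rule n_diam_upper[OF n bd1])
    moreover have "z = (\<lambda>i. of_real r * z' i)" unfolding z'_def using r by auto
    ultimately show "Pd n z powr ex n \<le> r * n_diam n (ball 0 1)"
      using Pd_scale[OF n, of "of_real r" z'] r by (simp add: mult_left_mono)
  qed
  have "n_diam n (ball 0 1) \<le> n_diam n (ball 0 r) / r"
  proof (rule n_diam_least[OF n bd1])
    fix z assume z: "z \<in> Tup n (ball 0 1)"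
    have "(\<lambda>i. of_real r * z i) \<in> Tup n (ball 0 r)" using z r unfolding Tup_def
      by (auto simp: norm_mult)
    then have "Pd n (\<lambda>i. of_real r * z i) powr ex n \<le> n_diam n (ball 0 r)" by (rule n_diam_upper[OF n bd[OF r]])
    then show "Pd n z powr ex n \<le> n_diam n (ball 0 r) / r"
      using Pd_scale[OF n, of "of_real r" z] r by (simp add: field_simps)
  qed
  then show "r * n_diam n (ball 0 1) \<le> n_diam n (ball 0 r)" using r by (simp add: field_simps)
qed



lemma comb_neg:
  fixes x y u v :: real
  assumes "x \<in> {..<0}" "y \<in> {..<0}" "0 \<le> u" "0 \<le> v" "u + v = 1"
  shows "u *\<^sub>R x + v *\<^sub>R y \<in> {..<0}"
proof -
  have "u * x \<le> 0" "v * y \<le> 0" using assms by (auto simp: mult_nonneg_nonpos)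
  moreover have "u * x < 0 \<or> v * y < 0"
  proof (cases "u = 0")
    case True then have "v = 1" using assms by simp
    then show ?thesis using assms by simp
  next
    case False then have "u > 0" using assms by simp
    then show ?thesis using assms by (simp add: mult_pos_neg)
  qed
  ultimately show ?thesis by auto
qed

lemma transfer_mono_convex:
  fixes g h :: "real \<Rightarrow> real"
  assumes eq: "\<And>t. t < 0 \<Longrightarrow> h t = g t / c" and c: "c \<ge> 0"
    and m: "mono_on {..<0} g" and cv: "convex_on {..<0} g"
  shows "mono_on {..<0} h \<and> convex_on {..<0} h"
proof
  show "mono_on {..<0} h"
  proof (rule mono_onI)
    fix x y :: real assume "x \<in> {..<0}" "y \<in> {..<0}" "x \<le> y"
    then show "h x \<le> h y" using eq mono_onD[OF m] c by (simp add: divide_right_mono)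
  qed
  have cv': "convex_on {..<0} (\<lambda>t. g t / c)" by (rule convex_on_cdiv[OF c cv])
  show "convex_on {..<0} h"
    unfolding convex_on_def
  proof (intro conjI ballI allI impI)
    show "convex {..<0::real}" by simp
    fix x y u v :: real assume xy: "x \<in> {..<0}" "y \<in> {..<0}" and uv: "0 \<le> u" "0 \<le> v" "u + v = 1"
    have "u *\<^sub>R x + v *\<^sub>R y \<in> {..<0}" using comb_neg[OF xy uv] .
    then show "h (u *\<^sub>R x + v *\<^sub>R y) \<le> u * h x + v * h y"
      using cv' xy uv eq unfolding convex_on_def by auto
  qed
qed

theorem lemma2p1:
  fixes f :: "complex \<Rightarrow> complex" and n :: nat
  assumes "f analytic_on ball 0 1" and "n \<ge> 2"
  shows "mono_on {..<0::real}
           (\<lambda>t. n_diam n (f ` ball 0 (exp t)) / (n_diam n (ball 0 1) * exp t))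
       \<and> convex_on {..<0::real}
           (\<lambda>t. n_diam n (f ` ball 0 (exp t)) / (n_diam n (ball 0 1) * exp t))
       \<and> mono_on {..<0::real}
           (\<lambda>t. log_cap (f ` ball 0 (exp t)) / log_cap (ball 0 (exp t)))
       \<and> convex_on {..<0::real}
           (\<lambda>t. log_cap (f ` ball 0 (exp t)) / log_cap (ball 0 (exp t)))"
proof -
  have holo: "f holomorphic_on ball 0 1" using assms(1) by (rule analytic_imp_holomorphic)
  have n: "n \<ge> 2" by fact
  have bd1: "bounded (ball (0::complex) 1)" "ball (0::complex) 1 \<noteq> {}" by auto
  define C where "C = n_diam n (ball 0 1)"
  have C0: "C \<ge> 0" unfolding C_def by (rule n_diam_nonneg[OF n bd1])
  define \<Phi> where "\<Phi> m t = n_diam m (f ` ball 0 (exp t)) / exp t" for m t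
  have part1: "mono_on {..<0::real} (\<lambda>t. n_diam n (f ` ball 0 (exp t)) / (C * exp t))
      \<and> convex_on {..<0::real} (\<lambda>t. n_diam n (f ` ball 0 (exp t)) / (C * exp t))"
    by (rule transfer_mono_convex[OF _ C0 phi_mono[OF holo n] phi_convex[OF holo n]])
       (simp add: mult.commute)
  define L where "L = log_cap (ball 0 1)"
  have L0: "L \<ge> 0" unfolding L_def by (rule n_diam_conv(2)[OF bd1])
  define c where "c t = log_cap (f ` ball 0 (exp t))" for t
  have bdt: "bounded (f ` ball 0 (exp t))" "f ` ball 0 (exp t) \<noteq> {}" if "t < 0" for t
    using img_bdd[OF holo, of "exp t"] that by auto
  have lim\<Phi>: "(\<lambda>m. \<Phi> m t) \<longlonglongrightarrow> c t / exp t" if "t < 0" for t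
    unfolding \<Phi>_def c_def by (intro tendsto_divide tendsto_const n_diam_conv(1)[OF bdt[OF that]]) auto
  have capball: "log_cap (ball 0 (exp t)) = exp t * L" for t
  proof -
    have "(\<lambda>m. exp t * n_diam m (ball 0 1)) \<longlonglongrightarrow> exp t * L"
      unfolding L_def by (intro tendsto_mult_left n_diam_conv(1)[OF bd1])
    moreover have "\<forall>\<^sub>F m in sequentially. exp t * n_diam m (ball 0 1) = n_diam m (ball 0 (exp t))"
      unfolding eventually_sequentially
      using n_diam_ball_scale[of _ "exp t"] by (intro exI[of _ 2]) simp
    ultimately have "(\<lambda>m. n_diam m (ball 0 (exp t))) \<longlonglongrightarrow> exp t * L"
      by (rule Lim_transform_eventually)
    moreover have "(\<lambda>m. n_diam m (ball 0 (exp t))) \<longlonglongrightarrow> log_cap (ball 0 (exp t))"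
      by (rule n_diam_conv(1)) auto
    ultimately show ?thesis using LIMSEQ_unique by blast
  qed
  have \<Psi>mono: "mono_on {..<0} (\<lambda>t. c t / exp t)"
  proof (rule mono_onI)
    fix x y :: real assume xy: "x \<in> {..<0}" "y \<in> {..<0}" "x \<le> y"
    show "c x / exp x \<le> c y / exp y"
    proof (rule LIMSEQ_le[OF lim\<Phi> lim\<Phi>])
      show "\<exists>N. \<forall>m\<ge>N. \<Phi> m x \<le> \<Phi> m y"
        using xy mono_onD[OF phi_mono[OF holo]] unfolding \<Phi>_def by (intro exI[of _ 2]) auto
    qed (use xy in auto)
  qed
  have \<Psi>convex: "convex_on {..<0} (\<lambda>t. c t / exp t)"
    unfolding convex_on_def
  proof (intro conjI ballI allI impI)
    show "convex {..<0::real}" by simp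
    fix x y u v :: real assume xy: "x \<in> {..<0}" "y \<in> {..<0}" and uv: "0 \<le> u" "0 \<le> v" "u + v = 1"
    have t: "u *\<^sub>R x + v *\<^sub>R y \<in> {..<0}" using comb_neg[OF xy uv] .
    show "c (u *\<^sub>R x + v *\<^sub>R y) / exp (u *\<^sub>R x + v *\<^sub>R y) \<le> u * (c x / exp x) + v * (c y / exp y)"
    proof (rule LIMSEQ_le[OF lim\<Phi>])
      show "(\<lambda>m. u * \<Phi> m x + v * \<Phi> m y) \<longlonglongrightarrow> u * (c x / exp x) + v * (c y / exp y)"
        using xy by (intro tendsto_add tendsto_mult_left lim\<Phi>) auto
      show "\<exists>N. \<forall>m\<ge>N. \<Phi> m (u *\<^sub>R x + v *\<^sub>R y) \<le> u * \<Phi> m x + v * \<Phi> m y"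
      proof (intro exI[of _ 2] allI impI)
        fix m :: nat assume "m \<ge> 2"
        then show "\<Phi> m (u *\<^sub>R x + v *\<^sub>R y) \<le> u * \<Phi> m x + v * \<Phi> m y"
          using phi_convex[OF holo, of m] xy uv unfolding \<Phi>_def convex_on_def by blast
      qed
    qed (use t in auto)
  qed
  have part2: "mono_on {..<0::real} (\<lambda>t. log_cap (f ` ball 0 (exp t)) / log_cap (ball 0 (exp t)))
      \<and> convex_on {..<0::real} (\<lambda>t. log_cap (f ` ball 0 (exp t)) / log_cap (ball 0 (exp t)))"
    by (rule transfer_mono_convex[OF _ L0 \<Psi>mono \<Psi>convex])
       (simp add: capball c_def mult.commute)
  show ?thesis using part1 part2 unfolding C_def by blast
qed

end
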